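(* Fix $t_+\in\mathbb{C}\setminus(-\infty,-1]$ and $t_-\in\mathbb{C}\setminus[1,\infty)$. For $a,b\in I$ with $a\prec b$, the function $F_a^b(s)=\sum_{c\in I,\ a\prec c\prec b}c^{-s}$, defined for $\Re(s)>1$, extends to an entire function of $s\in\mathbb{C}$.
   Context: Let $I_+=\{n+t_+: n\in\mathbb{Z}_{\ge0}\}$, $I_-=\{-n+t_-: n\in\mathbb{Z}_{\ge0}\}$ and $I=I_+\amalg I_-$ (formal disjoint union), totally ordered by $t_+\prec1+t_+\prec2+t_+\prec\cdots\prec-2+t_-\prec-1+t_-\prec t_-$ (every element of $I_+$ precedes every element of $I_-$). For $a=n+t_+\in I_+$, $a^{-s}=(n+t_+)^{-s}$ with the principal branch of the logarithm; for $a=-n+t_-\in I_-$, $a^{-s}$ is understood as $e^{\pi is}(n-t_-)^{-s}$ (principal branch). *)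

theory Defs
  imports "HOL-Analysis.Analysis"
begin

text \<open>The index set I = I_+ disjoint-union I_-.  IP n stands for n + t_+ and IM n for -n + t_-.\<close>
datatype Iidx = IP nat | IM nat

fun Iprec :: "Iidx \<Rightarrow> Iidx \<Rightarrow> bool" where
  "Iprec (IP m) (IP n) = (m < n)"
| "Iprec (IP m) (IM n) = True"
| "Iprec (IM m) (IP n) = False"
| "Iprec (IM m) (IM n) = (n < m)"

text \<open>c^(-s): principal branch for I_+; e^(pi i s) (n - t_-)^(-s) for c = -n + t_- in I_-.\<close>
fun Ipow :: "complex \<Rightarrow> complex \<Rightarrow> Iidx \<Rightarrow> complex \<Rightarrow> complex" where
  "Ipow tp tm (IP n) s = (of_nat n + tp) powr (- s)"
| "Ipow tp tm (IM n) s = exp (of_real pi * \<i> * s) * (of_nat n - tm) powr (- s)"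

end

theory Submission
  imports Defs "HOL-Complex_Analysis.Complex_Analysis"
begin


lemma norm_powr_le: "norm ((x::complex) powr y) \<le> norm x powr Re y * exp (pi * \<bar>Im y\<bar>)"
proof -
  have "- Im y * Arg x \<le> pi * \<bar>Im y\<bar>"
  proof -
    have "\<bar>Arg x\<bar> \<le> pi" using Arg_bounded[of x] by auto
    hence "\<bar>Im y\<bar> * \<bar>Arg x\<bar> \<le> \<bar>Im y\<bar> * pi" by (intro mult_left_mono) auto
    moreover have "- Im y * Arg x \<le> \<bar>Im y\<bar> * \<bar>Arg x\<bar>"
      by (metis abs_ge_self abs_minus_cancel abs_mult mult_minus_left)
    ultimately show ?thesis by (simp add: mult.commute)
  qed
  hence "exp (- Im y * Arg x) \<le> exp (pi * \<bar>Im y\<bar>)" by simp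
  thus ?thesis unfolding norm_powr_complex
    by (intro mult_left_mono) auto
qed

lemma holo_series:
  fixes f :: "nat \<Rightarrow> complex \<Rightarrow> complex"
  assumes S: "open S" and hol: "\<And>n. f n holomorphic_on S"
    and loc: "\<And>x. x \<in> S \<Longrightarrow> \<exists>d h. 0 < d \<and> summable h \<and> (\<forall>\<^sub>F n in sequentially. \<forall>y\<in>ball x d \<inter> S. norm (f n y) \<le> h n)"
  shows "(\<lambda>x. \<Sum>n. f n x) holomorphic_on S" "\<And>x. x \<in> S \<Longrightarrow> summable (\<lambda>n. f n x)"
proof -
  have hfd: "\<And>n x. x \<in> S \<Longrightarrow> (f n has_field_derivative deriv (f n) x) (at x)"
  proof -
    fix n x assume "x \<in> S"
    hence "f n field_differentiable (at x)" by (rule holomorphic_on_imp_differentiable_at[OF hol S])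
    thus "(f n has_field_derivative deriv (f n) x) (at x)" by (simp add: DERIV_deriv_iff_field_differentiable)
  qed
  obtain g g' where gg: "\<forall>x \<in> S. ((\<lambda>n. f n x) sums g x) \<and> ((\<lambda>n. deriv (f n) x) sums g' x) \<and> (g has_field_derivative g' x) (at x)"
    using series_and_derivative_comparison_local[OF S hfd loc] by blast
  have "g holomorphic_on S" unfolding holomorphic_on_open[OF S]
  proof
    fix x assume "x \<in> S" thus "\<exists>f'. (g has_field_derivative f') (at x)" using gg by blast
  qed
  moreover have eq: "\<And>x. x \<in> S \<Longrightarrow> (\<Sum>n. f n x) = g x"
  proof -
    fix x assume "x \<in> S" hence "(\<lambda>n. f n x) sums g x" using gg by blast
    thus "(\<Sum>n. f n x) = g x" by (rule sums_unique[symmetric])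
  qed
  ultimately show "(\<lambda>x. \<Sum>n. f n x) holomorphic_on S" using holomorphic_cong[of S S "\<lambda>x. \<Sum>n. f n x" g] by simp
  show "\<And>x. x \<in> S \<Longrightarrow> summable (\<lambda>n. f n x)"
  proof -
    fix x assume "x \<in> S" hence "(\<lambda>n. f n x) sums g x" using gg by blast
    thus "summable (\<lambda>n. f n x)" by (rule sums_summable)
  qed
qed

definition Zf :: "complex \<Rightarrow> complex \<Rightarrow> complex" where
  "Zf b s = (\<Sum>k. (of_nat k + b) powr (-s))"

lemma norm_kb: "Re b \<ge> 0 \<Longrightarrow> real k + Re b \<le> norm (of_nat k + b)"
  by (metis Re_complex_of_real abs_Re_le_cmod abs_ge_self order.trans plus_complex.sel(1) of_real_of_nat_eq)

lemma term_bound: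
  assumes "Re b \<ge> 1" "Re s \<ge> 0"
  shows "norm ((of_nat k + b) powr (-s)) \<le> (real k + Re b) powr (- Re s) * exp (pi * \<bar>Im s\<bar>)"
proof -
  have "norm ((of_nat k + b) powr (-s)) \<le> norm (of_nat k + b) powr (- Re s) * exp (pi * \<bar>Im s\<bar>)"
    using norm_powr_le[of "of_nat k + b" "-s"] by simp
  also have "\<dots> \<le> (real k + Re b) powr (- Re s) * exp (pi * \<bar>Im s\<bar>)"
    using assms norm_kb[of b k] by (intro mult_right_mono powr_mono2') auto
  finally show ?thesis .
qed

lemma summable_shift_powr:
  assumes "\<rho> \<ge> 1" "\<sigma> > 1"
  shows "summable (\<lambda>k. (real k + \<rho>) powr (- \<sigma>))"
proof -
  have "summable (\<lambda>k. real k powr (- \<sigma>))" using summable_real_powr_iff assms by simp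
  then show ?thesis
  proof (rule summable_comparison_test'[where N=1])
    fix n :: nat assume "n \<ge> 1"
    then show "norm ((real n + \<rho>) powr (- \<sigma>)) \<le> real n powr (- \<sigma>)"
      using assms by (auto intro!: powr_mono2')
  qed
qed



lemma Z_summable_norm:
  assumes "Re b \<ge> 1" "Re s > 1"
  shows "summable (\<lambda>k. norm ((of_nat k + b) powr (-s)))"
proof (rule summable_comparison_test'[where N=0])
  show "summable (\<lambda>k. (real k + Re b) powr (- Re s) * exp (pi * \<bar>Im s\<bar>))"
    using summable_shift_powr[of "Re b" "Re s"] assms by (intro summable_mult2) auto
  fix n :: nat
  show "norm (norm ((of_nat n + b) powr (-s))) \<le> (real n + Re b) powr (- Re s) * exp (pi * \<bar>Im s\<bar>)"
    using term_bound[of b s n] assms by simp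
qed

lemma Z_sums: "Re b \<ge> 1 \<Longrightarrow> Re s > 1 \<Longrightarrow> (\<lambda>k. (of_nat k + b) powr (-s)) sums Zf b s"
  unfolding Zf_def by (rule summable_sums[OF summable_norm_cancel[OF Z_summable_norm]])

lemma Z_has_sum: "Re b \<ge> 1 \<Longrightarrow> Re s > 1 \<Longrightarrow> ((\<lambda>k. (of_nat k + b) powr (-s)) has_sum Zf b s) UNIV"
  by (rule norm_summable_imp_has_sum[OF Z_summable_norm Z_sums])

lemma powr_split_bound:
  assumes "\<rho> \<ge> 1" "\<sigma> \<ge> 2"
  shows "(real k + \<rho>) powr (- \<sigma>) \<le> \<rho> powr (2 - \<sigma>) * (real k + \<rho>) powr (-2)"
proof -
  have "(real k + \<rho>) powr (- \<sigma>) = (real k + \<rho>) powr (2 - \<sigma>) * (real k + \<rho>) powr (-2)"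
  proof -
    have "(real k + \<rho>) powr (- \<sigma>) = (real k + \<rho>) powr ((2 - \<sigma>) + (-2))" by simp
    also have "\<dots> = (real k + \<rho>) powr (2 - \<sigma>) * (real k + \<rho>) powr (-2)" by (rule powr_add)
    finally show ?thesis .
  qed
  also have "\<dots> \<le> \<rho> powr (2 - \<sigma>) * (real k + \<rho>) powr (-2)"
    using assms by (intro mult_right_mono powr_mono2') auto
  finally show ?thesis .
qed

definition Cb :: "complex \<Rightarrow> real" where "Cb b = (\<Sum>k. (real k + Re b) powr (-2))"

lemma Z_bound:
  assumes "Re b \<ge> 1" "Re w \<ge> 2"
  shows "norm (Zf b w) \<le> exp (pi * \<bar>Im w\<bar>) * Cb b * Re b powr (2 - Re w)"
proof -
  have s2: "summable (\<lambda>k. (real k + Re b) powr (-2))"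
    using summable_shift_powr[of "Re b" 2] assms by simp
  have sb: "summable (\<lambda>k. (Re b powr (2 - Re w) * (real k + Re b) powr (-2)) * exp (pi * \<bar>Im w\<bar>))"
    using s2 by (intro summable_mult2 summable_mult) 
  have le: "norm ((of_nat k + b) powr (-w)) \<le> (Re b powr (2 - Re w) * (real k + Re b) powr (-2)) * exp (pi * \<bar>Im w\<bar>)" for k
  proof -
    have "norm ((of_nat k + b) powr (-w)) \<le> (real k + Re b) powr (- Re w) * exp (pi * \<bar>Im w\<bar>)"
      using term_bound[of b w k] assms by simp
    also have "\<dots> \<le> (Re b powr (2 - Re w) * (real k + Re b) powr (-2)) * exp (pi * \<bar>Im w\<bar>)"
      using powr_split_bound[of "Re b" "Re w" k] assms by (intro mult_right_mono) auto
    finally show ?thesis .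
  qed
  have "norm (Zf b w) \<le> (\<Sum>k. norm ((of_nat k + b) powr (-w)))"
    unfolding Zf_def using Z_summable_norm[of b w] assms by (intro summable_norm) auto
  also have "\<dots> \<le> (\<Sum>k. (Re b powr (2 - Re w) * (real k + Re b) powr (-2)) * exp (pi * \<bar>Im w\<bar>))"
    using Z_summable_norm[of b w] assms sb le by (intro suminf_le) auto
  also have "\<dots> = exp (pi * \<bar>Im w\<bar>) * Cb b * Re b powr (2 - Re w)"
  proof -
    have "(\<lambda>k. (Re b powr (2 - Re w) * (real k + Re b) powr (-2)) * exp (pi * \<bar>Im w\<bar>))
       = (\<lambda>k. (real k + Re b) powr (-2) * (exp (pi * \<bar>Im w\<bar>) * Re b powr (2 - Re w)))"
      by (intro ext) (simp only: mult_ac)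
    hence "(\<Sum>k. (Re b powr (2 - Re w) * (real k + Re b) powr (-2)) * exp (pi * \<bar>Im w\<bar>))
       = Cb b * (exp (pi * \<bar>Im w\<bar>) * Re b powr (2 - Re w))"
      unfolding Cb_def using suminf_mult2[OF s2] by simp
    thus ?thesis by (simp only: mult_ac)
  qed
  finally show ?thesis .
qed

lemma Z_holo: "Re b \<ge> 1 \<Longrightarrow> Zf b holomorphic_on {s. Re s > 1}"
proof -
  assume b: "Re b \<ge> 1"
  have "(\<lambda>s. \<Sum>k. (of_nat k + b) powr (-s)) holomorphic_on {s. Re s > 1}"
  proof (rule holo_series)
    show "open {s. Re s > 1}" by (rule open_halfspace_Re_gt)
    show "(\<lambda>s. (of_nat n + b) powr (-s)) holomorphic_on {s. Re s > 1}" for n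
      by (intro holomorphic_intros)
    fix x assume x: "x \<in> {s. Re s > 1}"
    define d where "d = (Re x - 1) / 2"
    have d: "d > 0" using x by (simp add: d_def)
    show "\<exists>d h. 0 < d \<and> summable h \<and> (\<forall>\<^sub>F n in sequentially. \<forall>y\<in>ball x d \<inter> {s. Re s > 1}. norm ((of_nat n + b) powr (-y)) \<le> h n)"
    proof (intro exI conjI)
      show "0 < d" by fact
      show "summable (\<lambda>n. (real n + Re b) powr (- (1 + d)) * exp (pi * (\<bar>Im x\<bar> + d)))"
        using summable_shift_powr[of "Re b" "1 + d"] b d by (intro summable_mult2) auto
      show "\<forall>\<^sub>F n in sequentially. \<forall>y\<in>ball x d \<inter> {s. Re s > 1}. norm ((of_nat n + b) powr (-y)) \<le> (real n + Re b) powr (- (1 + d)) * exp (pi * (\<bar>Im x\<bar> + d))"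
      proof (intro always_eventually allI ballI)
        fix n y assume y: "y \<in> ball x d \<inter> {s. Re s > 1}"
        have dy: "norm (x - y) < d" using y by (simp add: dist_norm)
        have r: "\<bar>Re x - Re y\<bar> < d" "\<bar>Im x - Im y\<bar> < d"
          using abs_Re_le_cmod[of "x - y"] abs_Im_le_cmod[of "x - y"] dy by auto
        have r1: "Re y \<ge> 1 + d" using r(1) abs_ge_self[of "Re x - Re y"] unfolding d_def by (smt (verit) field_sum_of_halves)
        have r2: "\<bar>Im y\<bar> \<le> \<bar>Im x\<bar> + d" using r by (auto simp: abs_if split: if_split_asm)
        have "norm ((of_nat n + b) powr (-y)) \<le> (real n + Re b) powr (- Re y) * exp (pi * \<bar>Im y\<bar>)"
          using term_bound[of b y n] b y by simp
        also have "\<dots> \<le> (real n + Re b) powr (- (1 + d)) * exp (pi * (\<bar>Im x\<bar> + d))"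
          using r1 r2 b d by (intro mult_mono powr_mono) auto
        finally show "norm ((of_nat n + b) powr (-y)) \<le> (real n + Re b) powr (- (1 + d)) * exp (pi * (\<bar>Im x\<bar> + d))" .
      qed
    qed
  qed
  thus ?thesis unfolding Zf_def[abs_def] .
qed



fun bet :: "real \<Rightarrow> nat \<Rightarrow> real" where
  "bet A 0 = 1"
| "bet A (Suc k) = bet A k * (A + real k) / real (Suc k)"

lemma gch_rec: "(a::complex) gchoose Suc k = (a gchoose k) * (a - of_nat k) / of_nat (Suc k)"
proof -
  have "(a gchoose Suc k) * fact (Suc k) = (a gchoose k) * fact k * (a - of_nat k)"
    unfolding gbinomial_mult_fact' by (simp add: prod.atLeast0_lessThan_Suc)
  also have "fact (Suc k) = (of_nat (Suc k) :: complex) * fact k" by (rule fact_Suc)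
  finally have "(a gchoose Suc k) * of_nat (Suc k) * fact k = (a gchoose k) * (a - of_nat k) * fact k"
    by (simp only: mult_ac)
  hence "(a gchoose Suc k) * of_nat (Suc k) = (a gchoose k) * (a - of_nat k)"
    by (metis fact_nonzero mult_cancel_right)
  thus ?thesis by (simp add: eq_divide_eq del: of_nat_Suc)
qed

lemma bet_nonneg: "A \<ge> 0 \<Longrightarrow> bet A k \<ge> 0"
  by (induction k) auto

lemma bet_mono: "0 \<le> A \<Longrightarrow> A \<le> A' \<Longrightarrow> bet A k \<le> bet A' k"
proof (induction k)
  case (Suc k)
  have "bet A k * (A + real k) \<le> bet A' k * (A' + real k)"
    using Suc bet_nonneg[of A k] by (intro mult_mono) auto
  thus ?case by (simp add: divide_right_mono del: of_nat_Suc)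
qed simp

lemma gch_bound: "norm ((a::complex) gchoose k) \<le> bet (norm a) k"
proof (induction k)
  case (Suc k)
  have "norm (a gchoose Suc k) = norm (a gchoose k) * norm (a - of_nat k) / real (Suc k)"
    unfolding gch_rec by (simp add: norm_mult norm_divide del: of_nat_Suc)
  also have "\<dots> \<le> bet (norm a) k * (norm a + real k) / real (Suc k)"
    using Suc norm_triangle_ineq4[of a "of_nat k"] bet_nonneg[of "norm a" k]
    by (intro divide_right_mono mult_mono) auto
  finally show ?case by simp
qed simp

lemma bet_summable:
  assumes "A \<ge> 0" "0 \<le> r" "r < 1"
  shows "summable (\<lambda>k. bet A k * r ^ k)"
proof (rule summable_ratio_test[where c="(1 + r) / 2" and N="nat (ceiling (2 * A / (1 - r)))"])
  show "(1 + r) / 2 < 1" using assms by simp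
  fix n assume n: "nat (ceiling (2 * A / (1 - r))) \<le> n"
  have n1: "2 * A / (1 - r) \<le> real n" using n by linarith
  have r1: "1 - r > 0" using assms by simp
  have n2: "2 * A \<le> real n * (1 - r)" using n1 r1 by (simp add: pos_divide_le_eq)
  have key: "r * (A + real n) \<le> (1 + r) / 2 * (real n + 1)"
  proof -
    have "r * (2 * A) \<le> r * (real n * (1 - r))" using n2 assms by (intro mult_left_mono) auto
    moreover have "r * (real n * (1 - r)) \<le> real n * (1 - r)"
      using assms r1 by (intro mult_left_le_one_le) auto
    ultimately have "2 * r * A \<le> (1 - r) * real n" by (simp only: mult_ac)
    moreover have "(1 - r) * real n = real n - r * real n" "r * (A + real n) = r * A + r * real n"
      "(1 + r) / 2 * (real n + 1) = (real n + 1 + r * real n + r) / 2" "2 * r * A = 2 * (r * A)"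
      by (simp_all add: algebra_simps add_divide_distrib)
    ultimately show ?thesis using assms(2) by argo
  qed
  have b0: "bet A n \<ge> 0" using bet_nonneg[OF assms(1)] .
  have "norm (bet A (Suc n) * r ^ Suc n) = (bet A n * r ^ n) * (r * (A + real n) / (real n + 1))"
    using b0 assms by (simp add: abs_mult add.commute mult_ac)
  also have "\<dots> \<le> (bet A n * r ^ n) * ((1 + r) / 2)"
  proof (rule mult_left_mono)
    show "r * (A + real n) / (real n + 1) \<le> (1 + r) / 2"
      using key by (simp add: divide_le_eq)
    show "0 \<le> bet A n * r ^ n" using b0 assms by simp
  qed
  also have "\<dots> = (1 + r) / 2 * norm (bet A n * r ^ n)"
    using b0 assms by (simp add: abs_mult)
  finally show "norm (bet A (Suc n) * r ^ Suc n) \<le> (1 + r) / 2 * norm (bet A n * r ^ n)" .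
qed



lemma nonneg_summable_on:
  fixes G :: "nat \<Rightarrow> real"
  assumes "summable G" "\<And>i. G i \<ge> 0"
  shows "(G has_sum suminf G) UNIV" "G summable_on UNIV" "infsum G UNIV = suminf G"
proof -
  show h: "(G has_sum suminf G) UNIV" using sums_nonneg_imp_has_sum[OF summable_sums[OF assms(1)] assms(2)] .
  thus "G summable_on UNIV" by (rule has_sum_imp_summable)
  show "infsum G UNIV = suminf G" using h by (rule infsumI)
qed

lemma prod_abs_summable:
  fixes G H :: "nat \<Rightarrow> real"
  assumes "summable G" "\<And>i. G i \<ge> 0" "summable H" "\<And>k. H k \<ge> 0"
  shows "(\<lambda>x. norm ((\<lambda>(k,i). H k * G i) x)) summable_on UNIV \<times> UNIV"
proof -
  have "(\<lambda>x. norm ((\<lambda>(k,i). H k * G i) x)) summable_on Sigma UNIV (\<lambda>_. UNIV)"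
  proof (rule Infinite_Sum.abs_summable_on_Sigma_iff[where f="\<lambda>(k,i). H k * G i" and A=UNIV and B="\<lambda>_. UNIV", THEN iffD2], intro conjI ballI)
    fix k :: nat
    have "(\<lambda>i. H k * G i) summable_on UNIV"
      using nonneg_summable_on(2)[OF assms(1,2)] by (rule summable_on_cmult_right)
    thus "(\<lambda>y. norm ((\<lambda>(k,i). H k * G i) (k, y))) summable_on UNIV"
      using assms by (simp add: abs_mult)
  next
    have eq: "infsum (\<lambda>y. norm ((\<lambda>(k,i). H k * G i) (k, y))) UNIV = H k * suminf G" for k
      using assms nonneg_summable_on(3)[OF assms(1,2)] by (simp add: abs_mult infsum_cmult_right')
    have "(\<lambda>k. H k * suminf G) summable_on UNIV"
      using nonneg_summable_on(2)[OF assms(3,4)] by (rule summable_on_cmult_left)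
    moreover have "suminf G \<ge> 0" using assms by (simp add: suminf_nonneg)
    ultimately show "(\<lambda>k. norm (infsum (\<lambda>y. norm ((\<lambda>(k,i). H k * G i) (k, y))) UNIV)) summable_on UNIV"
      unfolding eq using assms by simp
  qed
  thus ?thesis by simp
qed

lemma powr_mult_Re_pos:
  fixes w v p :: complex
  assumes "Re w > 0" "Re v > 0"
  shows "(w * v) powr p = w powr p * v powr p"
proof -
  have nz: "w \<noteq> 0" "v \<noteq> 0" using assms by auto
  have "\<bar>Im (Ln w)\<bar> < pi / 2" "\<bar>Im (Ln v)\<bar> < pi / 2" using assms Re_Ln_pos_lt_imp by auto
  hence "Ln (w * v) = Ln w + Ln v" using nz by (intro Ln_times_simple) auto
  thus ?thesis using nz by (simp add: powr_def exp_add distrib_left)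
qed

lemma binom_step:
  fixes w p :: complex
  assumes "Re w \<ge> 2"
  shows "(\<lambda>i. (p gchoose Suc i) * w powr (p - of_nat (Suc i))) sums ((w + 1) powr p - w powr p)"
proof -
  have wnz: "w \<noteq> 0" using assms by auto
  have nw: "norm w \<ge> 2" using assms abs_Re_le_cmod[of w] by linarith
  define z where "z = 1 / w"
  have nz: "norm z < 1" using nw by (simp add: z_def norm_divide divide_less_eq)
  have "Re z > -1" using nz abs_Re_le_cmod[of z] by linarith
  hence rz: "Re (1 + z) > 0" by simp
  have "(\<lambda>n. w powr p * ((p gchoose n) * z^n)) sums (w powr p * (1 + z) powr p)"
    using gen_binomial_complex[OF nz] by (rule sums_mult)
  also have "w powr p * (1 + z) powr p = (w * (1 + z)) powr p"
    using assms rz by (intro powr_mult_Re_pos[symmetric]) auto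
  also have "w * (1 + z) = w + 1" using wnz by (simp add: z_def field_simps)
  also have "(\<lambda>n. w powr p * ((p gchoose n) * z^n)) = (\<lambda>n. (p gchoose n) * w powr (p - of_nat n))"
  proof
    fix n
    have "w powr p * z ^ n = w powr p / w powr (of_nat n)"
      using wnz by (simp add: z_def power_one_over divide_inverse power_inverse)
    also have "\<dots> = w powr (p - of_nat n)" by (simp add: powr_diff)
    finally show "w powr p * ((p gchoose n) * z^n) = (p gchoose n) * w powr (p - of_nat n)"
      by (simp add: mult_ac)
  qed
  finally have "(\<lambda>n. (p gchoose n) * w powr (p - of_nat n)) sums ((w + 1) powr p)" .
  hence "(\<lambda>i. (p gchoose Suc i) * w powr (p - of_nat (Suc i))) sums ((w + 1) powr p - (p gchoose 0) * w powr (p - of_nat 0))"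
    by (subst sums_Suc_iff) simp
  thus ?thesis by simp
qed

lemma tele:
  assumes "Re b \<ge> 1" "Re p < 0"
  shows "(\<lambda>k. (of_nat (Suc k) + b) powr p - (of_nat k + b) powr p) sums (- (b powr p))"
proof -
  have lim: "(\<lambda>k. (of_nat k + b) powr p) \<longlonglongrightarrow> 0"
  proof (rule Lim_null_comparison)
    show "\<forall>\<^sub>F k in sequentially. norm ((of_nat k + b) powr p) \<le> (real k + Re b) powr Re p * exp (pi * \<bar>Im p\<bar>)"
    proof (intro always_eventually allI)
      fix k
      have "norm ((of_nat k + b) powr p) \<le> norm (of_nat k + b) powr Re p * exp (pi * \<bar>Im p\<bar>)"
        by (rule norm_powr_le)
      also have "\<dots> \<le> (real k + Re b) powr Re p * exp (pi * \<bar>Im p\<bar>)"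
        using assms norm_kb[of b k] by (intro mult_right_mono powr_mono2') auto
      finally show "norm ((of_nat k + b) powr p) \<le> (real k + Re b) powr Re p * exp (pi * \<bar>Im p\<bar>)" .
    qed
    have "filterlim (\<lambda>k. Re b + real k) at_top sequentially"
      by (rule filterlim_tendsto_add_at_top[OF tendsto_const filterlim_real_sequentially])
    hence "filterlim (\<lambda>k. real k + Re b) at_top sequentially" by (simp add: add.commute)
    hence "(\<lambda>k. (real k + Re b) powr Re p) \<longlonglongrightarrow> 0" using assms by (intro tendsto_neg_powr) auto
    thus "(\<lambda>k. (real k + Re b) powr Re p * exp (pi * \<bar>Im p\<bar>)) \<longlonglongrightarrow> 0"
      by (intro tendsto_mult_left_zero)
  qed
  have "(\<lambda>k. (of_nat (Suc k) + b) powr p - (of_nat k + b) powr p) sums (0 - (of_nat 0 + b) powr p)"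
    using telescope_sums[OF lim] by simp
  thus ?thesis by simp
qed



lemma pow_half_bound:
  fixes x \<sigma> :: real
  assumes "x \<ge> 2"
  shows "x powr (-(\<sigma> + real i)) \<le> x powr (-\<sigma>) * (1/2)^i"
proof -
  have "x powr (-(\<sigma> + real i)) = x powr (-\<sigma>) * x powr (- real i)"
    by (simp add: powr_add[symmetric])
  also have "x powr (- real i) = inverse (x ^ i)"
    using assms by (simp add: powr_minus powr_realpow)
  also have "inverse (x ^ i) \<le> (1/2)^i"
  proof -
    have "(2::real) ^ i \<le> x ^ i" using assms by (intro power_mono) auto
    hence "inverse (x ^ i) \<le> inverse (2 ^ i)" by (intro le_imp_inverse_le) auto
    thus ?thesis by (simp add: power_one_over inverse_eq_divide)
  qed
  hence "x powr (-\<sigma>) * inverse (x ^ i) \<le> x powr (-\<sigma>) * (1/2)^i" by (intro mult_left_mono) auto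
  finally show ?thesis .
qed

lemma Z_identity:
  assumes b: "Re b \<ge> 2" and s: "Re s > 1"
  shows "(\<lambda>i. ((1 - s) gchoose Suc i) * Zf b (s + of_nat i)) sums (- (b powr (1 - s)))"
proof -
  define p where "p = 1 - s"
  define T where "T k i = (p gchoose Suc i) * (of_nat k + b) powr (-(s + of_nat i))" for k i :: nat
  define e where "e = exp (pi * \<bar>Im s\<bar>)"
  define A where "A = norm p"
  define G where "G i = 2 * (bet A (Suc i) * (1/2) ^ Suc i)" for i :: nat
  define H where "H k = (real k + Re b) powr (- Re s) * e" for k :: nat
  have A0: "A \<ge> 0" by (simp add: A_def)
  have G0: "G i \<ge> 0" for i using bet_nonneg[OF A0, of "Suc i"] by (simp add: G_def del: bet.simps)
  have H0: "H k \<ge> 0" for k by (simp add: H_def e_def)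
  have sG: "summable G"
  proof -
    have "summable (\<lambda>j. bet A j * (1/2) ^ j)" using bet_summable[OF A0, of "1/2"] by simp
    hence "summable (\<lambda>i. bet A (Suc i) * (1/2) ^ Suc i)" by (subst summable_Suc_iff)
    thus ?thesis unfolding G_def by (rule summable_mult)
  qed
  have sH: "summable H"
    unfolding H_def using summable_shift_powr[of "Re b" "Re s"] b s by (intro summable_mult2) auto
  have bound: "norm (T k i) \<le> H k * G i" for k i
  proof -
    have "norm (T k i) = norm (p gchoose Suc i) * norm ((of_nat k + b) powr (-(s + of_nat i)))"
      by (simp add: T_def norm_mult)
    also have "\<dots> \<le> bet A (Suc i) * ((real k + Re b) powr (- (Re s + real i)) * e)"
    proof (rule mult_mono)
      show "norm (p gchoose Suc i) \<le> bet A (Suc i)" unfolding A_def by (rule gch_bound)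
      show "norm ((of_nat k + b) powr (-(s + of_nat i))) \<le> (real k + Re b) powr (- (Re s + real i)) * e"
        using term_bound[of b "s + of_nat i" k] b s by (simp add: e_def)
      show "0 \<le> bet A (Suc i)" using bet_nonneg[OF A0] .
    qed simp
    also have "\<dots> \<le> bet A (Suc i) * (((real k + Re b) powr (- Re s) * (1/2)^i) * e)"
      using pow_half_bound[of "real k + Re b" "Re s" i] b bet_nonneg[OF A0, of "Suc i"]
      by (intro mult_left_mono mult_right_mono) (auto simp: e_def)
    also have "\<dots> = H k * G i" by (simp add: H_def G_def mult_ac del: bet.simps)
    finally show ?thesis .
  qed
  have absT: "(\<lambda>x. norm ((\<lambda>(k,i). T k i) x)) summable_on UNIV \<times> UNIV"
  proof (rule Infinite_Sum.abs_summable_on_comparison_test)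
    show "(\<lambda>x. norm ((\<lambda>(k,i). H k * G i) x)) summable_on UNIV \<times> UNIV"
      by (rule prod_abs_summable[OF sG G0 sH H0])
    fix x :: "nat \<times> nat"
    show "norm ((\<lambda>(k,i). T k i) x) \<le> norm ((\<lambda>(k,i). H k * G i) x)"
      using bound G0 H0 by (cases x) auto
  qed
  hence "(\<lambda>(k,i). T k i) summable_on UNIV \<times> UNIV" by (rule abs_summable_summable)
  then obtain S where hS: "((\<lambda>(k,i). T k i) has_sum S) (UNIV \<times> UNIV)"
    using has_sum_infsum by blast
  define R where "R k = (of_nat (Suc k) + b) powr p - (of_nat k + b) powr p" for k :: nat
  have rows: "((\<lambda>i. T k i) has_sum R k) UNIV" for k
  proof (rule norm_summable_imp_has_sum)
    show "summable (\<lambda>i. norm (T k i))"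
      by (rule summable_comparison_test'[where N=0, OF summable_mult[OF sG, of "H k"]]) (simp add: bound)
    have "Re (of_nat k + b) \<ge> 2" using b by simp
    from binom_step[OF this, of p]
    have "(\<lambda>i. (p gchoose Suc i) * (of_nat k + b) powr (p - of_nat (Suc i))) sums R k"
      by (simp add: R_def add_ac)
    moreover have "(\<lambda>i. (p gchoose Suc i) * (of_nat k + b) powr (p - of_nat (Suc i))) = (\<lambda>i. T k i)"
      by (rule ext) (simp add: T_def p_def algebra_simps)
    ultimately show "(\<lambda>i. T k i) sums R k" by simp
  qed
  have "(R has_sum S) UNIV"
    using has_sum_SigmaD[where f="\<lambda>(k,i). T k i" and S=S and A=UNIV and B="\<lambda>_. UNIV" and g=R] hS rows by simp
  hence "R sums S" by (rule has_sum_imp_sums)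
  moreover have "R sums (- (b powr p))"
    unfolding R_def using b s by (intro tele) (auto simp: p_def)
  ultimately have S: "S = - (b powr p)" using sums_unique2 by blast
  have hS': "((\<lambda>(i,k). T k i) has_sum S) (UNIV \<times> UNIV)"
    using hS has_sum_swap[where f="\<lambda>(k,i). T k i" and S=S and A=UNIV and B=UNIV] by simp
  have cols: "((\<lambda>k. T k i) has_sum ((p gchoose Suc i) * Zf b (s + of_nat i))) UNIV" for i
    unfolding T_def by (rule has_sum_cmult_right, rule Z_has_sum) (use b s in auto)
  have "((\<lambda>i. (p gchoose Suc i) * Zf b (s + of_nat i)) has_sum S) UNIV"
    using has_sum_SigmaD[where f="\<lambda>(i,k). T k i" and S=S and A=UNIV and B="\<lambda>_. UNIV"] hS' cols by simp
  hence "(\<lambda>i. (p gchoose Suc i) * Zf b (s + of_nat i)) sums S" by (rule has_sum_imp_sums)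
  thus ?thesis using S by (simp add: p_def)
qed



lemma gch_eq: "(a::complex) gchoose n = (\<Prod>i = 0..<n. a - of_nat i) / fact n"
  using gbinomial_mult_fact'[of a n] by (simp add: eq_divide_eq)

lemma gch_holo: "(\<lambda>s. (1 - s) gchoose n) holomorphic_on S"
  unfolding gch_eq by (intro holomorphic_intros) auto

lemma Cb_nonneg: "Re b \<ge> 1 \<Longrightarrow> Cb b \<ge> 0"
  unfolding Cb_def using summable_shift_powr[of "Re b" 2] by (intro suminf_nonneg) auto

lemma E_bound_gen:
  assumes b: "Re b \<ge> 4" and w1: "Re w \<ge> \<sigma>0 + real i" and w2: "\<sigma>0 + real i \<ge> 2"
    and T: "\<bar>Im w\<bar> \<le> T" and c: "norm (w - 1) \<le> c + real i" "c \<ge> 0"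
  shows "norm ((w - 1) * Zf b w) \<le> (exp (pi * T) * Cb b * Re b powr (2 - \<sigma>0) * (c + 1)) * (1/2)^i"
proof -
  define K where "K = exp (pi * T) * Cb b * Re b powr (2 - \<sigma>0)"
  have K0: "K \<ge> 0" unfolding K_def using Cb_nonneg[of b] b by auto
  have "norm (Zf b w) \<le> exp (pi * \<bar>Im w\<bar>) * Cb b * Re b powr (2 - Re w)"
    using Z_bound[of b w] b w1 w2 by auto
  also have "\<dots> \<le> exp (pi * T) * Cb b * Re b powr (2 - (\<sigma>0 + real i))"
    using T w1 b Cb_nonneg[of b] by (intro mult_mono powr_mono) auto
  also have "Re b powr (2 - (\<sigma>0 + real i)) = Re b powr (2 - \<sigma>0) * inverse (Re b ^ i)"
  proof -
    have "Re b powr (2 - (\<sigma>0 + real i)) = Re b powr ((2 - \<sigma>0) + (- real i))" by (simp add: algebra_simps)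
    also have "\<dots> = Re b powr (2 - \<sigma>0) * Re b powr (- real i)" by (rule powr_add)
    also have "Re b powr (- real i) = inverse (Re b ^ i)" using b by (simp add: powr_minus powr_realpow)
    finally show ?thesis .
  qed
  also have "inverse (Re b ^ i) \<le> (1/4) ^ i"
  proof -
    have "(4::real) ^ i \<le> Re b ^ i" using b by (intro power_mono) auto
    hence "inverse (Re b ^ i) \<le> inverse (4 ^ i)" by (intro le_imp_inverse_le) auto
    thus ?thesis by (simp add: power_one_over inverse_eq_divide)
  qed
  hence "exp (pi * T) * Cb b * (Re b powr (2 - \<sigma>0) * inverse (Re b ^ i)) \<le> K * (1/4)^i"
    unfolding K_def using Cb_nonneg[of b] b by (simp add: mult_left_mono mult.assoc)
  finally have Zb: "norm (Zf b w) \<le> K * (1/4)^i" .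
  have "norm ((w - 1) * Zf b w) \<le> (c + real i) * (K * (1/4)^i)"
    unfolding norm_mult using c Zb by (intro mult_mono) auto
  also have "\<dots> \<le> ((c + 1) * (real i + 1)) * (K * (1/4)^i)"
    using c K0 by (intro mult_right_mono) (auto simp: algebra_simps)
  also have "\<dots> = K * (c + 1) * ((real i + 1) * (1/4)^i)" by (simp add: mult_ac)
  also have "(real i + 1) * (1/4::real)^i \<le> (1/2)^i"
  proof -
    have "real i + 1 \<le> 2 ^ i"
    proof -
      have "Suc i \<le> 2 ^ i" using less_exp[of i] by linarith
      hence "real (Suc i) \<le> real (2 ^ i)" by linarith
      thus ?thesis by simp
    qed
    hence "(real i + 1) * (1/4::real)^i \<le> 2 ^ i * (1/4)^i" by (intro mult_right_mono) auto
    also have "(2::real) ^ i * (1/4)^i = (1/2)^i" by (simp add: power_mult_distrib[symmetric])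
    finally show ?thesis .
  qed
  hence "K * (c + 1) * ((real i + 1) * (1/4)^i) \<le> K * (c + 1) * (1/2)^i"
    using K0 c by (intro mult_left_mono) auto
  finally show ?thesis unfolding K_def .
qed



definition Hs :: "nat \<Rightarrow> complex set" where "Hs N = {s. Re s > 1 - real N}"

definition Rop :: "complex \<Rightarrow> (complex \<Rightarrow> complex) \<Rightarrow> complex \<Rightarrow> complex" where
  "Rop b E s = b powr (1 - s) - (\<Sum>i. ((1 - s) gchoose Suc i) / of_nat (i + 2) * E (s + of_nat (Suc i)))"

lemma open_Hs: "open (Hs N)" unfolding Hs_def by (rule open_halfspace_Re_gt)

lemma step_eq:
  assumes b: "Re b \<ge> 4" and EZ: "\<And>w. Re w > 1 \<Longrightarrow> E w = (w - 1) * Zf b w" and s: "Re s > 1"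
  shows "Rop b E s = (s - 1) * Zf b s"
proof -
  define f where "f i = ((1 - s) gchoose Suc i) * Zf b (s + of_nat i)" for i
  have fs: "f sums (- (b powr (1 - s)))" unfolding f_def using Z_identity[of b s] b s by simp
  have "(\<lambda>i. f (Suc i)) sums (- (b powr (1 - s)) - f 0)"
    using fs by (subst sums_Suc_iff) simp
  moreover have "f (Suc i) = - (((1 - s) gchoose Suc i) / of_nat (i + 2) * E (s + of_nat (Suc i)))" for i
  proof -
    have "Re (s + of_nat (Suc i)) > 1" using s by simp
    hence e: "E (s + of_nat (Suc i)) = (s + of_nat (Suc i) - 1) * Zf b (s + of_nat (Suc i))" by (rule EZ)
    have "f (Suc i) = ((1 - s) gchoose Suc i) * ((1 - s) - of_nat (Suc i)) / of_nat (Suc (Suc i)) * Zf b (s + of_nat (Suc i))"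
      unfolding f_def by (subst gch_rec) simp
    also have "(1 - s) - of_nat (Suc i) = - (s + of_nat (Suc i) - 1)" by simp
    also have "of_nat (Suc (Suc i)) = (of_nat (i + 2) :: complex)" by simp
    finally show ?thesis unfolding e by (simp add: divide_inverse algebra_simps)
  qed
  ultimately have neg: "(\<lambda>i. - (((1 - s) gchoose Suc i) / of_nat (i + 2) * E (s + of_nat (Suc i)))) sums (- (b powr (1 - s)) - f 0)"
    by simp
  have "(\<lambda>i. ((1 - s) gchoose Suc i) / of_nat (i + 2) * E (s + of_nat (Suc i))) sums (b powr (1 - s) + f 0)"
    using sums_minus[OF neg] by (simp add: add.commute)
  hence "(\<Sum>i. ((1 - s) gchoose Suc i) / of_nat (i + 2) * E (s + of_nat (Suc i))) = b powr (1 - s) + f 0"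
    by (rule sums_unique[symmetric])
  moreover have "f 0 = (1 - s) * Zf b s" by (simp add: f_def)
  ultimately show ?thesis unfolding Rop_def by (simp add: algebra_simps)
qed

lemma step_one:
  assumes b: "Re b \<ge> 4"
  shows "Rop b E 1 = 1"
proof -
  have "b \<noteq> 0" using b by auto
  thus ?thesis unfolding Rop_def by (simp add: gbinomial_0_left)
qed

lemma step_holo:
  assumes b: "Re b \<ge> 4" and hol: "E holomorphic_on Hs N"
    and EZ: "\<And>w. Re w > 1 \<Longrightarrow> E w = (w - 1) * Zf b w"
  shows "Rop b E holomorphic_on Hs (Suc N)"
proof -
  define f where "f i s = ((1 - s) gchoose Suc i) / of_nat (i + 2) * E (s + of_nat (Suc i))" for i s
  have "(\<lambda>s. \<Sum>i. f i s) holomorphic_on Hs (Suc N)"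
  proof (rule holo_series[OF open_Hs])
    fix i
    have "(E \<circ> (\<lambda>s. s + of_nat (Suc i))) holomorphic_on Hs (Suc N)"
    proof (rule holomorphic_on_compose_gen[OF _ hol])
      show "(\<lambda>s. s + of_nat (Suc i)) holomorphic_on Hs (Suc N)" by (intro holomorphic_intros)
      show "(\<lambda>s. s + of_nat (Suc i)) ` Hs (Suc N) \<subseteq> Hs N" by (auto simp: Hs_def)
    qed
    hence "(\<lambda>s. E (s + of_nat (Suc i))) holomorphic_on Hs (Suc N)" by (simp add: o_def)
    thus "f i holomorphic_on Hs (Suc N)" unfolding f_def[abs_def]
      by (intro holomorphic_intros gch_holo) auto
  next
    fix x assume x: "x \<in> Hs (Suc N)"
    define A where "A = norm (1 - x) + 1"
    define T where "T = \<bar>Im x\<bar> + 1"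
    define c where "c = norm x + 1"
    define M where "M = exp (pi * T) * Cb b * Re b powr (2 - Re x) * (c + 1)"
    define i0 where "i0 = nat (ceiling (2 - Re x))"
    have A0: "A \<ge> 0" by (simp add: A_def)
    show "\<exists>d h. 0 < d \<and> summable h \<and> (\<forall>\<^sub>F n in sequentially. \<forall>y\<in>ball x d \<inter> Hs (Suc N). norm (f n y) \<le> h n)"
    proof (intro exI conjI)
      show "(0::real) < 1" by simp
      have "summable (\<lambda>j. bet A j * (1/2) ^ j)" using bet_summable[OF A0, of "1/2"] by simp
      hence "summable (\<lambda>i. bet A (Suc i) * (1/2) ^ Suc i)" by (subst summable_Suc_iff)
      hence "summable (\<lambda>i. (2 * M) * (bet A (Suc i) * (1/2) ^ Suc i))" by (rule summable_mult)
      moreover have "(\<lambda>i. (2 * M) * (bet A (Suc i) * (1/2) ^ Suc i)) = (\<lambda>i. bet A (Suc i) * (M * (1/2)^i))"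
        by (rule ext) (simp add: mult_ac del: bet.simps)
      ultimately show "summable (\<lambda>i. bet A (Suc i) * (M * (1/2)^i))" by simp
      show "\<forall>\<^sub>F n in sequentially. \<forall>y\<in>ball x 1 \<inter> Hs (Suc N). norm (f n y) \<le> bet A (Suc n) * (M * (1/2)^n)"
        unfolding eventually_sequentially
      proof (intro exI allI impI ballI)
        fix i y assume i: "i0 \<le> i" and y: "y \<in> ball x 1 \<inter> Hs (Suc N)"
        have dxy: "norm (x - y) < 1" using y by (simp add: dist_norm)
        have ri: "Re x + real i \<ge> 2" using i unfolding i0_def by linarith
        have rey: "Re y \<ge> Re x - 1" using abs_Re_le_cmod[of "x - y"] dxy by auto
        have imy: "\<bar>Im y\<bar> \<le> T" using abs_Im_le_cmod[of "x - y"] dxy unfolding T_def by auto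
        have ny: "norm y \<le> norm x + 1" using norm_triangle_ineq3[of x y] dxy
          by (metis add.commute add_le_cancel_left diff_le_eq norm_minus_commute norm_triangle_ineq2 order.trans less_imp_le)
        define w where "w = y + of_nat (Suc i)"
        have rw: "Re w \<ge> Re x + real i" using rey by (simp add: w_def)
        have Ew: "E w = (w - 1) * Zf b w" using rw ri by (intro EZ) auto
        have nw: "norm (w - 1) \<le> c + real i"
        proof -
          have "w - 1 = y + of_nat i" by (simp add: w_def)
          hence "norm (w - 1) \<le> norm y + real i" using norm_triangle_ineq[of y "of_nat i"] by simp
          thus ?thesis using ny unfolding c_def by simp
        qed
        have "norm (E w) \<le> M * (1/2)^i"
          unfolding Ew M_def
          by (rule E_bound_gen[OF b rw ri]) (use imy nw in \<open>auto simp: w_def c_def\<close>)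
        moreover have "norm (((1 - y) gchoose Suc i) / of_nat (i + 2)) \<le> bet A (Suc i)"
        proof -
          have nq: "norm (of_nat (i + 2) :: complex) = real i + 2" by (simp only: norm_of_nat)
          have "norm (((1 - y) gchoose Suc i) / of_nat (i + 2)) = norm ((1 - y) gchoose Suc i) / (real i + 2)"
            by (simp only: norm_divide nq)
          also have "\<dots> \<le> norm ((1 - y) gchoose Suc i)"
            using mult_left_mono[of 1 "real i + 2" "norm ((1 - y) gchoose Suc i)"] by (simp add: divide_le_eq del: bet.simps)
          finally have "norm (((1 - y) gchoose Suc i) / of_nat (i + 2)) \<le> norm ((1 - y) gchoose Suc i)" .
          also have "\<dots> \<le> bet (norm (1 - y)) (Suc i)" by (rule gch_bound)
          also have "\<dots> \<le> bet A (Suc i)"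
          proof (rule bet_mono)
            have "norm (1 - y) \<le> norm (1 - x) + norm (x - y)" using norm_triangle_ineq[of "1 - x" "x - y"] by simp
            thus "norm (1 - y) \<le> A" using dxy unfolding A_def by linarith
          qed simp
          finally show ?thesis .
        qed
        ultimately have "norm (((1 - y) gchoose Suc i) / of_nat (i + 2)) * norm (E w) \<le> bet A (Suc i) * (M * (1/2)^i)"
          using bet_nonneg[OF A0, of "Suc i"] by (intro mult_mono) (auto simp del: bet.simps)
        thus "norm (f i y) \<le> bet A (Suc i) * (M * (1/2)^i)"
          unfolding f_def w_def norm_mult[symmetric] .
      qed
    qed
  qed
  hence "(\<lambda>s. b powr (1 - s) - (\<Sum>i. f i s)) holomorphic_on Hs (Suc N)"
    by (intro holomorphic_intros)
  thus ?thesis unfolding Rop_def[abs_def] f_def .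
qed



lemma exists_N:
  assumes b: "Re b \<ge> 4"
  shows "\<exists>E. E holomorphic_on Hs N \<and> (\<forall>w. Re w > 1 \<longrightarrow> E w = (w - 1) * Zf b w) \<and> (N \<ge> 1 \<longrightarrow> E 1 = 1)"
proof (induction N)
  case 0
  have "(\<lambda>w. (w - 1) * Zf b w) holomorphic_on Hs 0"
    unfolding Hs_def using Z_holo[of b] b by (intro holomorphic_intros) auto
  thus ?case by auto
next
  case (Suc N)
  then obtain E where E: "E holomorphic_on Hs N" "\<forall>w. Re w > 1 \<longrightarrow> E w = (w - 1) * Zf b w" by blast
  have "Rop b E holomorphic_on Hs (Suc N)" using step_holo[OF b E(1)] E(2) by blast
  moreover have "\<forall>w. Re w > 1 \<longrightarrow> Rop b E w = (w - 1) * Zf b w" using step_eq[OF b] E(2) by blast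
  moreover have "Rop b E 1 = 1" by (rule step_one[OF b])
  ultimately show ?case by blast
qed

lemma Hs_mono: "M \<le> N \<Longrightarrow> Hs M \<subseteq> Hs N"
  unfolding Hs_def by auto

lemma entire_E:
  assumes b: "Re b \<ge> 4"
  shows "\<exists>E. E holomorphic_on UNIV \<and> (\<forall>w. Re w > 1 \<longrightarrow> E w = (w - 1) * Zf b w) \<and> E 1 = 1"
proof -
  obtain En where En: "\<And>N. En N holomorphic_on Hs N" "\<And>N w. Re w > 1 \<Longrightarrow> En N w = (w - 1) * Zf b w"
      "\<And>N. N \<ge> 1 \<Longrightarrow> En N 1 = 1"
    using exists_N[OF b] by metis
  have cons: "En M s = En N s" if "M \<le> N" "s \<in> Hs M" for M N s
  proof (rule analytic_continuation_open[where s="{w. Re w > 1}" and s'="Hs M" and f="En M" and g="En N"])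
    show "open {w. Re w > 1}" by (rule open_halfspace_Re_gt)
    show "open (Hs M)" by (rule open_Hs)
    show "{w. Re w > 1} \<noteq> {}" by (auto intro!: exI[of _ 2])
    show "connected (Hs M)" unfolding Hs_def by auto
    show "{w. Re w > 1} \<subseteq> Hs M" unfolding Hs_def by auto
    show "En M holomorphic_on Hs M" by (rule En(1))
    show "En N holomorphic_on Hs M" using En(1)[of N] Hs_mono[OF that(1)] by (rule holomorphic_on_subset)
    show "En M z = En N z" if "z \<in> {w. Re w > 1}" for z using En(2) that by auto
    show "s \<in> Hs M" by fact
  qed
  define Nf where "Nf s = nat (ceiling (- Re s)) + 2" for s :: complex
  have inN: "s \<in> Hs (Nf s)" for s
  proof -
    have "real (nat (ceiling (- Re s))) \<ge> - Re s" by linarith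
    thus ?thesis unfolding Hs_def Nf_def by simp
  qed
  define E where "E s = En (Nf s) s" for s
  have loc: "E s = En N s" if "s \<in> Hs N" for s N
  proof -
    have "E s = En (max N (Nf s)) s" unfolding E_def using cons[of "Nf s" "max N (Nf s)" s] inN by simp
    also have "\<dots> = En N s" using cons[of N "max N (Nf s)" s] that by simp
    finally show ?thesis .
  qed
  have "E holomorphic_on UNIV"
    unfolding holomorphic_on_open[OF open_UNIV]
  proof
    fix x :: complex
    have "En (Nf x) field_differentiable (at x)"
      using holomorphic_on_imp_differentiable_at[OF En(1) open_Hs inN] .
    then obtain f' where "(En (Nf x) has_field_derivative f') (at x)"
      using field_differentiable_def by blast
    hence "(E has_field_derivative f') (at x)"
      by (rule has_field_derivative_transform_within_open[OF _ open_Hs inN]) (use loc in auto)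
    thus "\<exists>f'. (E has_field_derivative f') (at x)" by blast
  qed
  moreover have "\<forall>w. Re w > 1 \<longrightarrow> E w = (w - 1) * Zf b w" unfolding E_def using En(2) by blast
  moreover have "E 1 = 1" unfolding E_def using En(3) by (simp add: Nf_def)
  ultimately show ?thesis by blast
qed



lemma tail_E:
  fixes a :: complex and M :: nat
  shows "\<exists>E. E holomorphic_on UNIV \<and> E 1 = 1 \<and>
    (\<forall>s. Re s > 1 \<longrightarrow> ((\<lambda>k. (of_nat k + a) powr (-s)) has_sum (E s / (s - 1))) {M..})"
proof -
  define K where "K = M + nat (ceiling (4 - Re a))"
  define b where "b = of_nat K + a"
  have b4: "Re b \<ge> 4" unfolding b_def K_def by simp linarith
  obtain Eb where Eb: "Eb holomorphic_on UNIV" "\<And>w. Re w > 1 \<Longrightarrow> Eb w = (w - 1) * Zf b w" "Eb 1 = 1"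
    using entire_E[OF b4] by blast
  define E where "E s = (s - 1) * (\<Sum>k\<in>{M..<K}. (of_nat k + a) powr (-s)) + Eb s" for s
  have "E holomorphic_on UNIV" unfolding E_def[abs_def] using Eb(1) by (intro holomorphic_intros) auto
  moreover have "E 1 = 1" using Eb(3) by (simp add: E_def)
  moreover have "((\<lambda>k. (of_nat k + a) powr (-s)) has_sum (E s / (s - 1))) {M..}" if s: "Re s > 1" for s
  proof -
    have s1: "s - 1 \<noteq> 0" using s by auto
    have fin: "((\<lambda>k. (of_nat k + a) powr (-s)) has_sum (\<Sum>k\<in>{M..<K}. (of_nat k + a) powr (-s))) {M..<K}"
      by (rule has_sum_finite) simp
    have "((\<lambda>j. (of_nat j + b) powr (-s)) has_sum Zf b s) UNIV"
      using Z_has_sum[of b s] b4 s by simp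
    moreover have "(\<lambda>j. (of_nat j + b) powr (-s)) = (\<lambda>k. (of_nat k + a) powr (-s)) \<circ> (\<lambda>j. j + K)"
      by (rule ext) (simp add: b_def add_ac)
    ultimately have "((\<lambda>k. (of_nat k + a) powr (-s)) has_sum Zf b s) ((\<lambda>j. j + K) ` UNIV)"
      by (subst has_sum_reindex) (auto simp: inj_on_def)
    moreover have "(\<lambda>j. j + K) ` UNIV = {K..}"
    proof (intro set_eqI iffI)
      fix x assume "x \<in> {K..}" hence "x = (x - K) + K" by simp
      thus "x \<in> (\<lambda>j. j + K) ` UNIV" by blast
    qed auto
    ultimately have tl: "((\<lambda>k. (of_nat k + a) powr (-s)) has_sum Zf b s) {K..}" by simp
    have "((\<lambda>k. (of_nat k + a) powr (-s)) has_sum ((\<Sum>k\<in>{M..<K}. (of_nat k + a) powr (-s)) + Zf b s)) ({M..<K} \<union> {K..})"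
      by (rule has_sum_Un_disjoint[OF fin tl]) auto
    moreover have "{M..<K} \<union> {K..} = {M..}" unfolding K_def by auto
    moreover have "(\<Sum>k\<in>{M..<K}. (of_nat k + a) powr (-s)) + Zf b s = E s / (s - 1)"
      using Eb(2)[OF s] s1 by (simp add: E_def field_simps)
    ultimately show ?thesis by simp
  qed
  ultimately show ?thesis by blast
qed

lemma Ipow_holo: "Ipow tp tm c holomorphic_on UNIV"
proof (cases c)
  case (IP n)
  have "Ipow tp tm c = (\<lambda>s. (of_nat n + tp) powr (- s))" by (rule ext) (simp add: IP)
  thus ?thesis by (simp add: holomorphic_intros)
next
  case (IM n)
  have "Ipow tp tm c = (\<lambda>s. exp (of_real pi * \<i> * s) * (of_nat n - tm) powr (- s))" by (rule ext) (simp add: IM)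
  thus ?thesis by (simp add: holomorphic_intros)
qed

lemma finite_case:
  assumes "finite S"
  shows "\<exists>F. F holomorphic_on UNIV \<and> (\<forall>s. Re s > 1 \<longrightarrow> ((\<lambda>c. Ipow tp tm c s) has_sum F s) S)"
proof (intro exI conjI allI impI)
  show "(\<lambda>s. \<Sum>c\<in>S. Ipow tp tm c s) holomorphic_on UNIV"
    using Ipow_holo by (intro holomorphic_on_sum) auto
  fix s :: complex
  show "((\<lambda>c. Ipow tp tm c s) has_sum (\<Sum>c\<in>S. Ipow tp tm c s)) S" using assms by simp
qed



lemma infinite_case:
  fixes tp tm :: complex and m n :: nat
  shows "\<exists>F. F holomorphic_on UNIV \<and>
           (\<forall>s. Re s > 1 \<longrightarrow>
              ((\<lambda>c. Ipow tp tm c s) has_sum F s) {c. Iprec (IP m) c \<and> Iprec c (IM n)})"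
proof -
  obtain E1 where E1: "E1 holomorphic_on UNIV" "E1 1 = 1"
    "\<And>s. Re s > 1 \<Longrightarrow> ((\<lambda>k. (of_nat k + tp) powr (-s)) has_sum (E1 s / (s - 1))) {Suc m..}"
    using tail_E[of tp "Suc m"] by blast
  obtain E2 where E2: "E2 holomorphic_on UNIV" "E2 1 = 1"
    "\<And>s. Re s > 1 \<Longrightarrow> ((\<lambda>k. (of_nat k + (- tm)) powr (-s)) has_sum (E2 s / (s - 1))) {Suc n..}"
    using tail_E[of "- tm" "Suc n"] by blast
  define g where "g s = E1 s + exp (of_real pi * \<i> * s) * E2 s" for s
  have gh: "g holomorphic_on UNIV" unfolding g_def[abs_def] using E1(1) E2(1) by (intro holomorphic_intros) auto
  have g1: "g 1 = 0" unfolding g_def using E1(2) E2(2) by (simp add: exp_pi_i')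
  define F where "F z = (if z = 1 then deriv g 1 else (g z - g 1) / (z - 1))" for z
  have "F holomorphic_on UNIV" unfolding F_def[abs_def] by (rule pole_lemma[OF gh]) simp
  moreover have "((\<lambda>c. Ipow tp tm c s) has_sum F s) {c. Iprec (IP m) c \<and> Iprec c (IM n)}" if s: "Re s > 1" for s
  proof -
    have s1: "s \<noteq> 1" using s by auto
    have set: "{c. Iprec (IP m) c \<and> Iprec c (IM n)} = IP ` {Suc m..} \<union> IM ` {Suc n..}"
    proof (intro set_eqI iffI)
      fix c assume "c \<in> {c. Iprec (IP m) c \<and> Iprec c (IM n)}"
      thus "c \<in> IP ` {Suc m..} \<union> IM ` {Suc n..}" by (cases c) auto
    next
      fix c assume "c \<in> IP ` {Suc m..} \<union> IM ` {Suc n..}"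
      thus "c \<in> {c. Iprec (IP m) c \<and> Iprec c (IM n)}" by auto
    qed
    have h1: "((\<lambda>c. Ipow tp tm c s) has_sum (E1 s / (s - 1))) (IP ` {Suc m..})"
      by (subst has_sum_reindex) (auto simp: o_def inj_on_def intro: E1(3)[OF s])
    have "((\<lambda>k. exp (of_real pi * \<i> * s) * (of_nat k + (- tm)) powr (-s)) has_sum (exp (of_real pi * \<i> * s) * (E2 s / (s - 1)))) {Suc n..}"
      by (rule has_sum_cmult_right[OF E2(3)[OF s]])
    hence h2: "((\<lambda>c. Ipow tp tm c s) has_sum (exp (of_real pi * \<i> * s) * (E2 s / (s - 1)))) (IM ` {Suc n..})"
      by (subst has_sum_reindex) (auto simp: o_def inj_on_def)
    have "((\<lambda>c. Ipow tp tm c s) has_sum (E1 s / (s - 1) + exp (of_real pi * \<i> * s) * (E2 s / (s - 1))))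
           (IP ` {Suc m..} \<union> IM ` {Suc n..})"
      by (rule has_sum_Un_disjoint[OF h1 h2]) auto
    moreover have "E1 s / (s - 1) + exp (of_real pi * \<i> * s) * (E2 s / (s - 1)) = F s"
    proof -
      have "F s = g s / (s - 1)" using s1 g1 by (simp add: F_def)
      also have "\<dots> = E1 s / (s - 1) + exp (of_real pi * \<i> * s) * (E2 s / (s - 1))"
        by (simp add: g_def add_divide_distrib)
      finally show ?thesis by simp
    qed
    ultimately show ?thesis unfolding set by simp
  qed
  ultimately show ?thesis by blast
qed

theorem lemma3p1:
  fixes tp tm :: complex and a b :: Iidx
  assumes "tp \<notin> complex_of_real ` {..-1}"
    and "tm \<notin> complex_of_real ` {1..}"
    and "Iprec a b"
  shows "\<exists>F. F holomorphic_on UNIV \<and>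
           (\<forall>s. Re s > 1 \<longrightarrow>
              ((\<lambda>c. Ipow tp tm c s) has_sum F s) {c. Iprec a c \<and> Iprec c b})"
proof (cases a)
  case (IP m)
  show ?thesis
  proof (cases b)
    case (IP n)
    have "{c. Iprec a c \<and> Iprec c b} \<subseteq> IP ` {..n}"
    proof
      fix c assume "c \<in> {c. Iprec a c \<and> Iprec c b}"
      thus "c \<in> IP ` {..n}" using \<open>a = IP m\<close> IP by (cases c) auto
    qed
    hence "finite {c. Iprec a c \<and> Iprec c b}" by (rule finite_subset) simp
    thus ?thesis by (rule finite_case)
  next
    case (IM n)
    show ?thesis unfolding \<open>a = IP m\<close> IM by (rule infinite_case)
  qed
next
  case (IM m)
  show ?thesis
  proof (cases b)
    case (IP n)
    thus ?thesis using assms(3) \<open>a = IM m\<close> by simp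
  next
    case (IM n)
    have "{c. Iprec a c \<and> Iprec c b} \<subseteq> IM ` {..m}"
    proof
      fix c assume "c \<in> {c. Iprec a c \<and> Iprec c b}"
      thus "c \<in> IM ` {..m}" using \<open>a = IM m\<close> IM by (cases c) auto
    qed
    hence "finite {c. Iprec a c \<and> Iprec c b}" by (rule finite_subset) simp
    thus ?thesis by (rule finite_case)
  qed
qed


end
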